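(* Fix $k\in\mathbb{N}$ and positive constants $b_0,b_1,b_2,\lambda_0,\lambda_1$. There exists $C>0$ depending only on $b_0,b_1,\lambda_0,\lambda_1$ (and the fixed $k$) such that the following holds. Let $T\geq10$, $\ell<r$, $a^\pm\in\mathbb{R}^k$, $g:[\ell,r]\to\mathbb{R}$ Lipschitz with $g(\ell)=g(r)=0$, and $P\subset(\ell,r)$ finite, with $P'=P\cap[\ell+T^{1/2},r-T^{1/2}]$ non-empty. Suppose that $r-\ell\leq b_0T$, $|P|\leq b_0T$, $|g(x)-g(y)|\leq b_1T|x-y|$ for all $x,y$, $a^\pm_j-a^\pm_{j+1}\geq\lambda_0T^{1/2}$ for $j\in\{1,\dots,k-1\}$, $a^-_k-g(\ell)\geq\lambda_1T$, $a^+_k-g(r)\geq\lambda_1T$, $a^-_1-g(\ell)\leq b_2T^2$, $a^+_1-g(r)\leq b_2T^2$. Then $\mathbb{E}_{\mathcal{L}'}[W'_+]\geq C^{-1}e^{-CT}$.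
   Context: $\mathbb{P}_{\mathrm{free}}$ is the law of $k$ independent Brownian bridges (diffusion parameter one) $\mathcal{L}=(\mathcal{L}_1,\dots,\mathcal{L}_k)$ on $[\ell,r]$ with $\mathcal{L}_j(\ell)=a^-_j$, $\mathcal{L}_j(r)=a^+_j$. $W'(\mathcal{L})=1$ if $\mathcal{L}_j(p)>g(p)$ for all $p\in P'$ and $j\in\{1,\dots,k\}$, and $0$ otherwise; $\mathbb{P}_{\mathcal{L}'}$ (expectation $\mathbb{E}_{\mathcal{L}'}$) is given by $d\mathbb{P}_{\mathcal{L}'}/d\mathbb{P}_{\mathrm{free}}=W'/\mathbb{E}_{\mathrm{free}}[W']$. $W'_+(\mathcal{L})=1$ if for all $p\in P'$ one has $\mathcal{L}_k(p)>g(p)$ and $\mathcal{L}_j(p)>\mathcal{L}_{j+1}(p)$ for all $j\in\{1,\dots,k-1\}$, and $W'_+(\mathcal{L})=0$ otherwise. *)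

theory Defs
  imports "HOL-Analysis.Analysis"
begin

definition heat :: "real \<Rightarrow> real \<Rightarrow> real \<Rightarrow> real" where
  "heat t x y = exp (- ((y - x)^2) / (2 * t)) / sqrt (2 * pi * t)"

text \<open>Joint density of the values at the sorted times ps (inside (l,r)) of k independent
  Brownian bridges, curve j (0-based, j<k) going from am j at time l to ap j at time r.
  A configuration x maps (j, p) to the value of curve j at time p.\<close>
definition bb_dens :: "nat \<Rightarrow> real \<Rightarrow> real \<Rightarrow> (nat \<Rightarrow> real) \<Rightarrow> (nat \<Rightarrow> real)
    \<Rightarrow> real list \<Rightarrow> (nat \<times> real \<Rightarrow> real) \<Rightarrow> real" where
  "bb_dens k l r am ap ps x =
     (\<Prod>j<k. (let ts = [l] @ ps @ [r];
                 vs = [am j] @ map (\<lambda>p. x (j, p)) ps @ [ap j]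
             in (\<Prod>i<length ps + 1. heat (ts ! Suc i - ts ! i) (vs ! i) (vs ! Suc i))
                / heat (r - l) (am j) (ap j)))"

text \<open>Expectation under P_free of an observable F depending only on the values of the
  k curves at the finitely many times in Q (finite-dimensional marginal of the bridges).\<close>
definition E_free :: "nat \<Rightarrow> real \<Rightarrow> real \<Rightarrow> (nat \<Rightarrow> real) \<Rightarrow> (nat \<Rightarrow> real) \<Rightarrow> real set
    \<Rightarrow> ((nat \<times> real \<Rightarrow> real) \<Rightarrow> real) \<Rightarrow> ennreal" where
  "E_free k l r am ap Q F =
     (\<integral>\<^sup>+ x. ennreal (F x * bb_dens k l r am ap (sorted_list_of_set Q) x)
        \<partial>(PiM ({0..<k} \<times> Q) (\<lambda>_. lborel)))"

definition Wp :: "nat \<Rightarrow> (real \<Rightarrow> real) \<Rightarrow> real set \<Rightarrow> (nat \<times> real \<Rightarrow> real) \<Rightarrow> real" where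
  "Wp k g Q x = (if (\<forall>p\<in>Q. \<forall>j<k. g p < x (j, p)) then 1 else 0)"

definition Wplus :: "nat \<Rightarrow> (real \<Rightarrow> real) \<Rightarrow> real set \<Rightarrow> (nat \<times> real \<Rightarrow> real) \<Rightarrow> real" where
  "Wplus k g Q x = (if (\<forall>p\<in>Q. g p < x (k - 1, p) \<and>
        (\<forall>j. j + 1 < k \<longrightarrow> x (j + 1, p) < x (j, p))) then 1 else 0)"

text \<open>Expectation under P_{L'}: dP_{L'}/dP_free = W' / E_free[W'].\<close>
definition E_L :: "nat \<Rightarrow> real \<Rightarrow> real \<Rightarrow> (nat \<Rightarrow> real) \<Rightarrow> (nat \<Rightarrow> real) \<Rightarrow> (real \<Rightarrow> real)
    \<Rightarrow> real set \<Rightarrow> ((nat \<times> real \<Rightarrow> real) \<Rightarrow> real) \<Rightarrow> real" where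
  "E_L k l r am ap g Q F =
     enn2real (E_free k l r am ap Q (\<lambda>x. F x * Wp k g Q x))
     / enn2real (E_free k l r am ap Q (Wp k g Q))"

end

theory Submission
  imports Defs "HOL-Probability.Probability"
begin


lemma sum_swap_diff:
  fixes f :: "nat \<Rightarrow> real"
  assumes "s < Suc k" "s \<noteq> k"
  shows "(\<Sum>m<Suc k. f m) = f s + f k + (\<Sum>m\<in>{..<Suc k} - {s,k}. f m)"
proof -
  have "(\<Sum>m<Suc k. f m) = (\<Sum>m\<in>{s,k}. f m) + (\<Sum>m\<in>{..<Suc k} - {s,k}. f m)"
    using assms by (subst sum.subset_diff[of "{s,k}"]) auto
  then show ?thesis using assms by simp
qed

lemma rearr:
  fixes u w :: "nat \<Rightarrow> real"
  assumes "\<forall>i j. i \<le> j \<longrightarrow> j < k \<longrightarrow> u j \<le> u i"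
    "\<forall>i j. i \<le> j \<longrightarrow> j < k \<longrightarrow> w j \<le> w i" "\<gamma> permutes {..<k}"
  shows "(\<Sum>m<k. u m * w (\<gamma> m)) \<le> (\<Sum>m<k. u m * w m)"
  using assms
proof (induction k arbitrary: \<gamma>)
  case 0
  then show ?case by simp
next
  case (Suc k)
  define s where "s = inv \<gamma> k"
  define t where "t = \<gamma> k"
  have gs: "\<gamma> s = k" unfolding s_def using Suc.prems(3)
    by (meson permutes_inverses(1))
  have sk: "s < Suc k" unfolding s_def using Suc.prems(3)
    by (metis lessI lessThan_iff permutes_inv permutes_in_image)
  have tk: "t < Suc k" unfolding t_def using Suc.prems(3)
    by (metis lessI lessThan_iff permutes_in_image)
  define \<tau> where "\<tau> = Transposition.transpose s k"
  define \<gamma>' where "\<gamma>' = \<gamma> \<circ> \<tau>"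
  have tau_perm: "\<tau> permutes {..<Suc k}" unfolding \<tau>_def using sk
    by (simp add: permutes_swap_id)
  have g'perm: "\<gamma>' permutes {..<Suc k}" unfolding \<gamma>'_def
    using tau_perm Suc.prems(3) by (simp add: permutes_compose)
  have g'k: "\<gamma>' k = k" unfolding \<gamma>'_def \<tau>_def using gs by simp
  have g'perm2: "\<gamma>' permutes {..<k}"
    using g'perm g'k by (rule_tac permutes_superset[OF g'perm]) (auto simp: less_Suc_eq)
  have step1: "(\<Sum>m<Suc k. u m * w (\<gamma> m)) \<le> (\<Sum>m<Suc k. u m * w (\<gamma>' m))"
  proof (cases "s = k")
    case True
    then have "\<gamma>' = \<gamma>" unfolding \<gamma>'_def \<tau>_def by auto
    then show ?thesis by simp
  next
    case False
    have "(\<Sum>m<Suc k. u m * w (\<gamma> m)) = (\<Sum>m<Suc k. u (\<tau> m) * w (\<gamma> (\<tau> m)))"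
      using sum.reindex_bij_betw[OF permutes_imp_bij[OF tau_perm], of "\<lambda>m. u m * w (\<gamma> m)"]
      by simp
    also have "\<dots> = (\<Sum>m<Suc k. u (\<tau> m) * w (\<gamma>' m))" unfolding \<gamma>'_def by simp
    finally have e1: "(\<Sum>m<Suc k. u m * w (\<gamma> m)) = (\<Sum>m<Suc k. u (\<tau> m) * w (\<gamma>' m))" .
    have e2: "(\<Sum>m<Suc k. u (\<tau> m) * w (\<gamma>' m)) = u k * w t + u s * w k + (\<Sum>m\<in>{..<Suc k} - {s,k}. u m * w (\<gamma>' m))"
      using sum_swap_diff[OF sk False, of "\<lambda>m. u (\<tau> m) * w (\<gamma>' m)"] False
      unfolding \<tau>_def \<gamma>'_def t_def using gs
      by (simp add: transpose_def)
    have e3: "(\<Sum>m<Suc k. u m * w (\<gamma>' m)) = u s * w t + u k * w k + (\<Sum>m\<in>{..<Suc k} - {s,k}. u m * w (\<gamma>' m))"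
      using sum_swap_diff[OF sk False, of "\<lambda>m. u m * w (\<gamma>' m)"] False
      unfolding \<tau>_def \<gamma>'_def t_def using gs
      by (simp add: transpose_def)
    have "u k \<le> u s" using Suc.prems(1) sk by auto
    moreover have "w k \<le> w t" using Suc.prems(2) tk by auto
    ultimately have "0 \<le> (u s - u k) * (w t - w k)" by (intro mult_nonneg_nonneg) auto
    then have "u k * w t + u s * w k \<le> u s * w t + u k * w k" by (simp add: algebra_simps)
    then show ?thesis using e1 e2 e3 by linarith
  qed
  have "(\<Sum>m<Suc k. u m * w (\<gamma>' m)) = (\<Sum>m<k. u m * w (\<gamma>' m)) + u k * w k"
    using g'k by simp
  also have "\<dots> \<le> (\<Sum>m<k. u m * w m) + u k * w k"
    using Suc.IH[OF _ _ g'perm2] Suc.prems(1,2) by auto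
  finally show ?case using step1 by simp
qed




lemma sq_rearr:
  fixes a b :: "nat \<Rightarrow> real"
  assumes "\<alpha> permutes {..<k}" "\<beta> permutes {..<k}"
    "\<forall>i j. i \<le> j \<longrightarrow> j < k \<longrightarrow> a (\<alpha> j) \<le> a (\<alpha> i)"
    "\<forall>i j. i \<le> j \<longrightarrow> j < k \<longrightarrow> b (\<beta> j) \<le> b (\<beta> i)"
  shows "(\<Sum>j<k. (a (\<alpha> j) - b (\<beta> j))^2) \<le> (\<Sum>j<k. (a j - b j)^2)"
proof -
  have ra: "(\<Sum>j<k. (a (\<alpha> j))^2) = (\<Sum>j<k. (a j)^2)"
    using sum.reindex_bij_betw[OF permutes_imp_bij[OF assms(1)], of "\<lambda>j. (a j)^2"] by simp
  have rb: "(\<Sum>j<k. (b (\<beta> j))^2) = (\<Sum>j<k. (b j)^2)"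
    using sum.reindex_bij_betw[OF permutes_imp_bij[OF assms(2)], of "\<lambda>j. (b j)^2"] by simp
  define \<gamma> where "\<gamma> = inv \<beta> \<circ> \<alpha>"
  have gp: "\<gamma> permutes {..<k}" unfolding \<gamma>_def
    using assms(1,2) by (simp add: permutes_compose permutes_inv)
  have "(\<Sum>j<k. a j * b j) = (\<Sum>m<k. a (\<alpha> m) * b (\<alpha> m))"
    using sum.reindex_bij_betw[OF permutes_imp_bij[OF assms(1)], of "\<lambda>j. a j * b j"] by simp
  also have "\<dots> = (\<Sum>m<k. a (\<alpha> m) * b (\<beta> (\<gamma> m)))"
    unfolding \<gamma>_def using assms(2) by (simp add: permutes_inverses(1))
  also have "\<dots> \<le> (\<Sum>m<k. a (\<alpha> m) * b (\<beta> m))"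
    using rearr[OF assms(3) _ gp, of "\<lambda>m. b (\<beta> m)"] assms(4) by simp
  finally have cr: "(\<Sum>j<k. a j * b j) \<le> (\<Sum>m<k. a (\<alpha> m) * b (\<beta> m))" .
  have e: "\<And>x y :: real. (x - y)^2 = x^2 + y^2 - 2 * (x * y)" by (simp add: power2_eq_square algebra_simps)
  show ?thesis
    unfolding e sum.distrib sum_subtractf sum_distrib_left[symmetric] ra rb using cr by simp
qed

lemma heat_prod_mono:
  fixes a b a' b' :: "nat \<Rightarrow> real"
  assumes "D > 0" "(\<Sum>j<k. (a j - b j)^2) \<le> (\<Sum>j<k. (a' j - b' j)^2)"
  shows "(\<Prod>j<k. heat D (a' j) (b' j)) \<le> (\<Prod>j<k. heat D (a j) (b j))"
proof -
  have h: "\<And>c d. (\<Prod>j<k. heat D (c j) (d j)) = exp (- (\<Sum>j<k. (c j - d j)^2) / (2 * D)) / sqrt (2 * pi * D) ^ k"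
  proof -
    fix c d :: "nat \<Rightarrow> real"
    have "(\<Prod>j<k. heat D (c j) (d j)) = (\<Prod>j<k. exp (- ((c j - d j)^2) / (2 * D))) / (\<Prod>j<k. sqrt (2 * pi * D))"
      unfolding heat_def prod_dividef by (simp add: power2_commute)
    also have "(\<Prod>j<k. exp (- ((c j - d j)^2) / (2 * D))) = exp (\<Sum>j<k. - ((c j - d j)^2) / (2 * D))"
      by (simp add: exp_sum)
    also have "(\<Sum>j<k. - ((c j - d j)^2) / (2 * D)) = - (\<Sum>j<k. (c j - d j)^2) / (2 * D)"
      by (simp add: sum_divide_distrib[symmetric] sum_negf)
    finally show "(\<Prod>j<k. heat D (c j) (d j)) = exp (- (\<Sum>j<k. (c j - d j)^2) / (2 * D)) / sqrt (2 * pi * D) ^ k"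
      by simp
  qed
  have "- (\<Sum>j<k. (a' j - b' j)^2) / (2 * D) \<le> - (\<Sum>j<k. (a j - b j)^2) / (2 * D)"
    using assms by (simp add: divide_right_mono)
  then show ?thesis unfolding h using assms(1)
    by (intro divide_right_mono) auto
qed




lemma dec_from_step:
  fixes f :: "nat \<Rightarrow> real"
  assumes "\<forall>j. j + 1 < k \<longrightarrow> f (j + 1) < f j" "i \<le> j" "j < k"
  shows "f j \<le> f i"
  using assms(2,3)
proof (induction j)
  case 0 then show ?case by simp
next
  case (Suc j)
  show ?case
  proof (cases "i = Suc j")
    case True then show ?thesis by simp
  next
    case False
    then have "i \<le> j" using Suc.prems by simp
    then have "f j \<le> f i" using Suc.IH Suc.prems by simp
    moreover have "f (Suc j) < f j" using assms(1) Suc.prems by (metis Suc_eq_plus1)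
    ultimately show ?thesis by simp
  qed
qed

lemma sdec_from_step:
  fixes f :: "nat \<Rightarrow> real"
  assumes "\<forall>j. j + 1 < k \<longrightarrow> f (j + 1) < f j" "i < j" "j < k"
  shows "f j < f i"
proof -
  have "f j \<le> f (i+1)" by (rule dec_from_step[OF assms(1)]) (use assms in auto)
  moreover have "f (i+1) < f i" using assms by simp
  ultimately show ?thesis by simp
qed

definition Vv :: "(nat \<Rightarrow> real) \<Rightarrow> (nat \<Rightarrow> real) \<Rightarrow> real list \<Rightarrow> (nat \<times> real \<Rightarrow> real) \<Rightarrow> nat \<Rightarrow> nat \<Rightarrow> real" where
  "Vv am ap ps x j i = ([am j] @ map (\<lambda>p. x (j, p)) ps @ [ap j]) ! i"

lemma Vv_eq: "Vv am ap ps x j i = (if i = 0 then am j else if i \<le> length ps then x (j, ps ! (i - 1)) else ap j)"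
  if "i \<le> length ps + 1"
  using that unfolding Vv_def
  by (auto simp: nth_append nth_Cons' le_Suc_eq)

definition Dl :: "real \<Rightarrow> real \<Rightarrow> real list \<Rightarrow> nat \<Rightarrow> real" where
  "Dl l r ps i = ([l] @ ps @ [r]) ! Suc i - ([l] @ ps @ [r]) ! i"

lemma bb_dens_eq:
  "bb_dens k l r am ap ps x =
    (\<Prod>i<length ps + 1. \<Prod>j<k. heat (Dl l r ps i) (Vv am ap ps x j i) (Vv am ap ps x j (Suc i)))
    / (\<Prod>j<k. heat (r - l) (am j) (ap j))"
  unfolding bb_dens_def Let_def prod_dividef Dl_def Vv_def
  by (subst prod.swap) simp

lemma Dl_pos:
  assumes "sorted_wrt (<) ps" "set ps \<subseteq> {l<..<r}" "l < r" "i < length ps + 1"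
  shows "Dl l r ps i > 0"
proof -
  have "sorted_wrt (<) ([l] @ ps @ [r])"
    using assms(1,2,3) by (auto simp: sorted_wrt_append)
  then have "([l] @ ps @ [r]) ! i < ([l] @ ps @ [r]) ! Suc i"
    by (rule sorted_wrt_nth_less) (use assms(4) in auto)
  then show ?thesis unfolding Dl_def by simp
qed




lemma heat_pos: "t > 0 \<Longrightarrow> heat t x y > 0"
  unfolding heat_def by simp

locale bbc =
  fixes k :: nat and l r :: real and am ap :: "nat \<Rightarrow> real" and Q :: "real set"
  assumes kpos: "k \<ge> 1" and finQ: "finite Q" and Qsub: "Q \<subseteq> {l<..<r}" and lr: "l < r"
    and amdec: "\<forall>j. j + 1 < k \<longrightarrow> am (j + 1) < am j"
    and apdec: "\<forall>j. j + 1 < k \<longrightarrow> ap (j + 1) < ap j"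
begin

abbreviation "ps \<equiv> sorted_list_of_set Q"
abbreviation "n \<equiv> length ps"

definition "II = {0..<k} \<times> Q"
definition "dens x = bb_dens k l r am ap ps x"
definition "ee \<pi> = (\<lambda>(j, p). (\<pi> p j, p))"
definition "Phi \<pi> x = (\<lambda>i\<in>II. x (ee \<pi> i))"

lemma set_ps: "set ps = Q" using finQ by simp
lemma ps_in: "i < n \<Longrightarrow> ps ! i \<in> Q" using set_ps nth_mem by blast
lemma sorted_ps: "sorted_wrt (<) ps" by (simp add: strict_sorted_list_of_set)

lemma Dl_pos': "i < n + 1 \<Longrightarrow> Dl l r ps i > 0"
  by (rule Dl_pos[OF sorted_ps]) (use set_ps Qsub lr in auto)

lemma denom_pos: "(\<Prod>j<k. heat (r - l) (am j) (ap j)) > 0"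
  using lr by (intro prod_pos) (auto intro: heat_pos)

lemma dens_eq: "dens x = (\<Prod>i<n + 1. \<Prod>j<k. heat (Dl l r ps i) (Vv am ap ps x j i) (Vv am ap ps x j (Suc i)))
    / (\<Prod>j<k. heat (r - l) (am j) (ap j))"
  unfolding dens_def by (rule bb_dens_eq)

lemma dens_pos: "dens x > 0"
  unfolding dens_eq using denom_pos Dl_pos' lr
  by (intro divide_pos_pos prod_pos) (auto intro: heat_pos)

lemma dens_Phi_mono:
  assumes perm: "\<forall>p\<in>Q. \<pi> p permutes {..<k}"
    and dec: "\<forall>p\<in>Q. \<forall>a b. a \<le> b \<longrightarrow> b < k \<longrightarrow> x (\<pi> p b, p) \<le> x (\<pi> p a, p)"
  shows "dens x \<le> dens (Phi \<pi> x)"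
proof -
  define \<rho> where "\<rho> i = (if i = 0 \<or> n < i then id else \<pi> (ps ! (i - 1)))" for i
  have f1: "Vv am ap ps (Phi \<pi> x) j i = Vv am ap ps x (\<rho> i j) i" if "i \<le> n + 1" "j < k" for i j
  proof -
    have "Phi \<pi> x (j, ps ! (i - 1)) = x (\<pi> (ps ! (i - 1)) j, ps ! (i - 1))" if "0 < i" "i \<le> n"
      unfolding Phi_def ee_def II_def using ps_in[of "i - 1"] that \<open>j < k\<close> by auto
    moreover have "\<pi> (ps ! (i - 1)) j < k" if "0 < i" "i \<le> n"
    proof -
      have "ps ! (i - 1) \<in> Q" by (rule ps_in) (use that in linarith)
      then have pp: "\<pi> (ps ! (i - 1)) permutes {..<k}" using perm by blast
      show ?thesis using permutes_in_image[OF pp, of j] \<open>j < k\<close> by simp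
    qed
    ultimately show ?thesis using that unfolding \<rho>_def
      by (simp add: Vv_eq)
  qed
  have f2: "\<rho> i permutes {..<k}" if "i \<le> n + 1" for i
    using perm ps_in[of "i - 1"] that unfolding \<rho>_def by (auto simp: permutes_id)
  have f3: "\<forall>a b. a \<le> b \<longrightarrow> b < k \<longrightarrow> Vv am ap ps x (\<rho> i b) i \<le> Vv am ap ps x (\<rho> i a) i"
    if hi: "i \<le> n + 1" for i
  proof (intro allI impI)
    fix a b assume ab: "a \<le> b" "b < k"
    consider "i = 0" | "0 < i" "i \<le> n" | "i = n + 1" using hi by linarith
    then show "Vv am ap ps x (\<rho> i b) i \<le> Vv am ap ps x (\<rho> i a) i"
    proof cases
      case 1 then show ?thesis using dec_from_step[OF amdec ab] by (simp add: Vv_eq \<rho>_def)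
    next
      case 2
      then have "x (\<pi> (ps ! (i - 1)) b, ps ! (i - 1)) \<le> x (\<pi> (ps ! (i - 1)) a, ps ! (i - 1))"
        using dec ps_in[of "i - 1"] ab by auto
      then show ?thesis using 2 hi by (simp add: Vv_eq \<rho>_def)
    next
      case 3 then show ?thesis using dec_from_step[OF apdec ab] by (simp add: Vv_eq \<rho>_def)
    qed
  qed
  have step: "(\<Prod>j<k. heat (Dl l r ps i) (Vv am ap ps x j i) (Vv am ap ps x j (Suc i)))
      \<le> (\<Prod>j<k. heat (Dl l r ps i) (Vv am ap ps (Phi \<pi> x) j i) (Vv am ap ps (Phi \<pi> x) j (Suc i)))"
    if "i < n + 1" for i
  proof -
    have "(\<Prod>j<k. heat (Dl l r ps i) (Vv am ap ps (Phi \<pi> x) j i) (Vv am ap ps (Phi \<pi> x) j (Suc i)))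
        = (\<Prod>j<k. heat (Dl l r ps i) (Vv am ap ps x (\<rho> i j) i) (Vv am ap ps x (\<rho> (Suc i) j) (Suc i)))"
      using f1 that by (intro prod.cong) auto
    moreover have "(\<Prod>j<k. heat (Dl l r ps i) (Vv am ap ps x j i) (Vv am ap ps x j (Suc i)))
        \<le> (\<Prod>j<k. heat (Dl l r ps i) (Vv am ap ps x (\<rho> i j) i) (Vv am ap ps x (\<rho> (Suc i) j) (Suc i)))"
      apply (rule heat_prod_mono[OF Dl_pos'[OF that]])
      apply (rule sq_rearr[OF f2 f2 f3 f3])
      using that by auto
    ultimately show ?thesis by simp
  qed
  have "(\<Prod>i<n + 1. \<Prod>j<k. heat (Dl l r ps i) (Vv am ap ps x j i) (Vv am ap ps x j (Suc i)))
      \<le> (\<Prod>i<n + 1. \<Prod>j<k. heat (Dl l r ps i) (Vv am ap ps (Phi \<pi> x) j i) (Vv am ap ps (Phi \<pi> x) j (Suc i)))"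
    using step Dl_pos' by (intro prod_mono) (auto intro!: prod_nonneg less_imp_le[OF heat_pos])
  then show ?thesis unfolding dens_eq using denom_pos
    by (intro divide_right_mono) auto
qed

end



context bbc
begin

abbreviation "MM \<equiv> PiM II (\<lambda>_. lborel :: real measure)"

lemma finII: "finite II" unfolding II_def using finQ by simp

lemma comp_meas: "i \<in> II \<Longrightarrow> (\<lambda>x. x i) \<in> borel_measurable MM"
  using measurable_component_singleton[of i II "\<lambda>_. lborel"] by simp

lemma perm_lt: "\<sigma> permutes {..<m} \<Longrightarrow> a < m \<Longrightarrow> \<sigma> a < m"
  using permutes_in_image by (metis lessThan_iff)

lemma perm_inv_lt: "\<sigma> permutes {..<m} \<Longrightarrow> a < m \<Longrightarrow> inv \<sigma> a < m"
  using permutes_in_image permutes_inv by (metis lessThan_iff)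

lemma Vv_meas: "j < k \<Longrightarrow> i \<le> n + 1 \<Longrightarrow> (\<lambda>x. Vv am ap ps x j i) \<in> borel_measurable MM"
proof -
  assume a: "j < k" "i \<le> n + 1"
  consider "i = 0" | "0 < i" "i \<le> n" | "n < i" by linarith
  then show ?thesis
  proof cases
    case 1 then show ?thesis using a by (simp add: Vv_eq)
  next
    case 2
    have "(j, ps ! (i - 1)) \<in> II" unfolding II_def using a 2 ps_in[of "i - 1"] by auto
    then show ?thesis using a 2 comp_meas by (simp add: Vv_eq)
  next
    case 3 then show ?thesis using a by (simp add: Vv_eq)
  qed
qed

lemma heat_meas:
  assumes "f \<in> borel_measurable N" "h \<in> borel_measurable N"
  shows "(\<lambda>x. heat t (f x) (h x)) \<in> borel_measurable N"
  unfolding heat_def using assms by measurable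

lemma dens_meas: "dens \<in> borel_measurable MM"
proof -
  have "(\<lambda>x. (\<Prod>i<n + 1. \<Prod>j<k. heat (Dl l r ps i) (Vv am ap ps x j i) (Vv am ap ps x j (Suc i)))
    / (\<Prod>j<k. heat (r - l) (am j) (ap j))) \<in> borel_measurable MM"
    apply (intro borel_measurable_divide borel_measurable_prod heat_meas Vv_meas borel_measurable_const)
    by auto
  then show ?thesis by (simp add: dens_eq[abs_def])
qed

lemma pcomp: "(j, p) \<in> II \<Longrightarrow> (\<lambda>x. c < x (j, p)) \<in> measurable MM (count_space UNIV)"
  using comp_meas[of "(j, p)"] by measurable

lemma pcomp2: "(j, p) \<in> II \<Longrightarrow> (j', p') \<in> II \<Longrightarrow> (\<lambda>x. x (j', p') < x (j, p)) \<in> measurable MM (count_space UNIV)"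
  using comp_meas[of "(j, p)"] comp_meas[of "(j', p')"] by measurable

lemma Wp_meas: "Wp k g Q \<in> borel_measurable MM"
proof -
  have "(\<lambda>x. \<forall>p\<in>Q. \<forall>j\<in>{..<k}. g p < x (j, p)) \<in> measurable MM (count_space UNIV)"
    apply (rule pred_intros_finite(3)[OF finQ])
    apply (rule pred_intros_finite(3)[OF finite_lessThan])
    apply (rule pcomp)
    unfolding II_def by auto
  then have "(\<lambda>x. \<forall>p\<in>Q. \<forall>j<k. g p < x (j, p)) \<in> measurable MM (count_space UNIV)"
    by (simp add: lessThan_def Ball_def)
  then show ?thesis unfolding Wp_def[abs_def] by measurable
qed

lemma Wplus_meas: "Wplus k g Q \<in> borel_measurable MM"
proof -
  have "(\<lambda>x. \<forall>p\<in>Q. g p < x (k - 1, p) \<and> (\<forall>j\<in>{..<k-1}. x (j + 1, p) < x (j, p))) \<in> measurable MM (count_space UNIV)"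
    apply (rule pred_intros_finite(3)[OF finQ])
    apply (rule pred_intros_logic(3))
    apply (rule pcomp)
    subgoal unfolding II_def using kpos by force
    apply (rule pred_intros_finite(3)[OF finite_lessThan])
    apply (rule pcomp2)
    unfolding II_def by auto
  moreover have "(\<lambda>x. \<forall>p\<in>Q. g p < x (k - 1, p) \<and> (\<forall>j\<in>{..<k-1}. x (j + 1, p) < x (j, p)))
     = (\<lambda>x. \<forall>p\<in>Q. g p < x (k - 1, p) \<and> (\<forall>j. j + 1 < k \<longrightarrow> x (j + 1, p) < x (j, p)))"
    by (intro ext) auto
  ultimately have "(\<lambda>x. \<forall>p\<in>Q. g p < x (k - 1, p) \<and> (\<forall>j. j + 1 < k \<longrightarrow> x (j + 1, p) < x (j, p))) \<in> measurable MM (count_space UNIV)"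
    by (metis (no_types, lifting))
  then show ?thesis unfolding Wplus_def[abs_def] by measurable
qed

definition "Perms = {\<pi>. \<forall>p\<in>Q. \<pi> p permutes {..<k}}"

lemma ee_bij: "\<pi> \<in> Perms \<Longrightarrow> bij_betw (ee \<pi>) II II"
proof -
  assume "\<pi> \<in> Perms"
  then have P: "\<And>p. p \<in> Q \<Longrightarrow> \<pi> p permutes {..<k}" unfolding Perms_def by auto
  define f where "f = (\<lambda>(j, p). (inv (\<pi> p) j, p))"
  show ?thesis
  proof (rule bij_betwI[where g = f])
    show "ee \<pi> \<in> II \<rightarrow> II" unfolding ee_def II_def using P
      by (auto intro!: perm_lt[OF P])
    show "f \<in> II \<rightarrow> II" unfolding f_def II_def using P
      by (auto intro!: perm_inv_lt[OF P])
    show "f (ee \<pi> x) = x" if "x \<in> II" for x using that P unfolding f_def ee_def II_def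
      by (auto simp: permutes_inverses[OF P])
    show "ee \<pi> (f y) = y" if "y \<in> II" for y using that P unfolding f_def ee_def II_def
      by (auto simp: permutes_inverses[OF P])
  qed
qed

interpretation PSF: product_sigma_finite "\<lambda>_::nat \<times> real. lborel :: real measure"
  by unfold_locales

lemma Phi_meas: "Phi \<pi> \<in> MM \<rightarrow>\<^sub>M MM" if "\<pi> \<in> Perms"
proof -
  have "ee \<pi> i \<in> II" if "i \<in> II" for i using ee_bij[OF \<open>\<pi> \<in> Perms\<close>] that
    by (meson bij_betwE)
  then show ?thesis unfolding Phi_def
    by (intro measurable_restrict) (auto intro: comp_meas)
qed

lemma distr_Phi: "distr MM MM (Phi \<pi>) = MM" if pi: "\<pi> \<in> Perms"
proof (rule PSF.PiM_eqI[OF finII])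
  show "sets (distr MM MM (Phi \<pi>)) = sets MM" by simp
  fix A :: "nat \<times> real \<Rightarrow> real set"
  assume A: "\<And>i. i \<in> II \<Longrightarrow> A i \<in> sets lborel"
  have bij: "bij_betw (ee \<pi>) II II" by (rule ee_bij[OF pi])
  define h where "h = inv_into II (ee \<pi>)"
  have hbij: "bij_betw h II II" unfolding h_def by (rule bij_betw_inv_into[OF bij])
  have h1: "\<And>i. i \<in> II \<Longrightarrow> ee \<pi> (h i) = i" unfolding h_def using bij
    by (meson bij_betw_inv_into_right)
  have h2: "\<And>i. i \<in> II \<Longrightarrow> h (ee \<pi> i) = i" unfolding h_def using bij
    by (meson bij_betw_inv_into_left)
  have eeI: "\<And>i. i \<in> II \<Longrightarrow> ee \<pi> i \<in> II" using bij by (meson bij_betwE)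
  have hI: "\<And>i. i \<in> II \<Longrightarrow> h i \<in> II" using hbij by (meson bij_betwE)
  have iff: "(Phi \<pi> x \<in> Pi\<^sub>E II A) = (x \<in> Pi\<^sub>E II (\<lambda>i. A (h i)))" if x: "x \<in> space MM" for x
  proof
    assume a: "Phi \<pi> x \<in> Pi\<^sub>E II A"
    show "x \<in> Pi\<^sub>E II (\<lambda>i. A (h i))"
    proof (rule PiE_I)
      fix i assume i: "i \<in> II"
      have "Phi \<pi> x (h i) \<in> A (h i)" using a hI[OF i] by (auto simp: PiE_iff)
      then show "x i \<in> A (h i)" unfolding Phi_def using hI[OF i] h1[OF i] by simp
    next
      fix i assume "i \<notin> II" then show "x i = undefined" using x
        by (cases i) (auto simp: space_PiM PiE_iff extensional_def)
    qed
  next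
    assume a: "x \<in> Pi\<^sub>E II (\<lambda>i. A (h i))"
    show "Phi \<pi> x \<in> Pi\<^sub>E II A"
    proof (rule PiE_I)
      fix i assume i: "i \<in> II"
      have "x (ee \<pi> i) \<in> A (h (ee \<pi> i))" using a eeI[OF i] by (auto simp: PiE_iff)
      then show "Phi \<pi> x i \<in> A i" unfolding Phi_def using i h2[OF i] by simp
    next
      fix i assume "i \<notin> II" then show "Phi \<pi> x i = undefined" unfolding Phi_def by simp
    qed
  qed
  have sp: "Pi\<^sub>E II (\<lambda>i. A (h i)) \<subseteq> space MM" by (auto simp: space_PiM PiE_iff)
  have set_eq: "Phi \<pi> -` Pi\<^sub>E II A \<inter> space MM = Pi\<^sub>E II (\<lambda>i. A (h i))"
    using iff sp by blast
  have "emeasure (distr MM MM (Phi \<pi>)) (Pi\<^sub>E II A) = emeasure MM (Phi \<pi> -` Pi\<^sub>E II A \<inter> space MM)"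
    using A by (intro emeasure_distr Phi_meas[OF pi] sets_PiM_I_finite finII) auto
  also have "\<dots> = emeasure MM (Pi\<^sub>E II (\<lambda>i. A (h i)))" by (simp add: set_eq)
  also have "\<dots> = (\<Prod>i\<in>II. emeasure lborel (A (h i)))"
    using A hI by (intro PSF.emeasure_PiM finII) auto
  also have "\<dots> = (\<Prod>i\<in>II. emeasure lborel (A i))"
    using prod.reindex_bij_betw[OF hbij, of "\<lambda>i. emeasure lborel (A i)"] by simp
  finally show "emeasure (distr MM MM (Phi \<pi>)) (Pi\<^sub>E II A) = (\<Prod>i\<in>II. emeasure lborel (A i))" .
qed

lemma nn_integral_Phi:
  assumes pi: "\<pi> \<in> Perms" and h: "h \<in> borel_measurable MM"
  shows "(\<integral>\<^sup>+ x. h (Phi \<pi> x) \<partial>MM) = (\<integral>\<^sup>+ x. h x \<partial>MM)"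
proof -
  have "(\<integral>\<^sup>+ x. h x \<partial>MM) = (\<integral>\<^sup>+ x. h x \<partial>distr MM MM (Phi \<pi>))" by (simp add: distr_Phi[OF pi])
  also have "\<dots> = (\<integral>\<^sup>+ x. h (Phi \<pi> x) \<partial>MM)"
    using h Phi_meas[OF pi] by (intro nn_integral_distr) (auto simp: distr_Phi[OF pi])
  finally show ?thesis by simp
qed

end



lemma rank_perm:
  fixes f :: "nat \<Rightarrow> real"
  assumes inj: "inj_on f {..<k}"
  shows "\<exists>\<sigma>. \<sigma> permutes {..<k} \<and> (\<forall>a b. a < b \<longrightarrow> b < k \<longrightarrow> f (\<sigma> b) < f (\<sigma> a))"
proof -
  define \<rho> where "\<rho> j = (if j < k then card {j'. j' < k \<and> f j < f j'} else j)" for j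
  have mono: "\<rho> j < \<rho> j'" if "j < k" "j' < k" "f j' < f j" for j j'
  proof -
    have "{j''. j'' < k \<and> f j < f j''} \<subset> {j''. j'' < k \<and> f j' < f j''}"
      using that by auto
    then have "card {j''. j'' < k \<and> f j < f j''} < card {j''. j'' < k \<and> f j' < f j''}"
      by (rule psubset_card_mono[rotated]) auto
    then show ?thesis unfolding \<rho>_def using that by simp
  qed
  have lt: "\<rho> j < k" if "j < k" for j
  proof -
    have "{j'. j' < k \<and> f j < f j'} \<subseteq> {..<k} - {j}" by auto
    then have "card {j'. j' < k \<and> f j < f j'} \<le> card ({..<k} - {j})"
      by (rule card_mono[rotated]) auto
    also have "\<dots> = k - 1" using that by simp
    finally show ?thesis unfolding \<rho>_def using that by simp
  qed
  have injr: "inj_on \<rho> {..<k}"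
  proof (rule inj_onI)
    fix j j' assume a: "j \<in> {..<k}" "j' \<in> {..<k}" "\<rho> j = \<rho> j'"
    show "j = j'"
    proof (rule ccontr)
      assume "j \<noteq> j'"
      then have "f j \<noteq> f j'" using inj a(1,2) by (meson inj_on_eq_iff)
      then show False using mono[of j j'] mono[of j' j] a by (cases "f j < f j'") auto
    qed
  qed
  have img: "\<rho> ` {..<k} = {..<k}"
    by (rule endo_inj_surj) (use lt injr in auto)
  have bj: "bij_betw \<rho> {..<k} {..<k}" by (simp add: bij_betw_def injr img)
  have rp: "\<rho> permutes {..<k}"
    by (rule bij_imp_permutes[OF bj]) (simp add: \<rho>_def)
  define \<sigma> where "\<sigma> = inv \<rho>"
  have sp: "\<sigma> permutes {..<k}" unfolding \<sigma>_def by (rule permutes_inv[OF rp])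
  have "f (\<sigma> b) < f (\<sigma> a)" if "a < b" "b < k" for a b
  proof (rule ccontr)
    assume "\<not> f (\<sigma> b) < f (\<sigma> a)"
    have ak: "\<sigma> a < k" "\<sigma> b < k" using that sp
      by (meson lessThan_iff permutes_in_image order.strict_trans)+
    have "\<sigma> a \<noteq> \<sigma> b" using that sp by (metis permutes_inj injD less_irrefl)
    then have "f (\<sigma> a) \<noteq> f (\<sigma> b)" using inj ak by (meson inj_on_eq_iff lessThan_iff)
    then have "f (\<sigma> a) < f (\<sigma> b)" using \<open>\<not> f (\<sigma> b) < f (\<sigma> a)\<close> by simp
    then have "\<rho> (\<sigma> b) < \<rho> (\<sigma> a)" using mono ak by blast
    moreover have "\<rho> (\<sigma> b) = b" "\<rho> (\<sigma> a) = a" unfolding \<sigma>_def using rp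
      by (simp_all add: permutes_inverses(1))
    ultimately show False using that by simp
  qed
  then show ?thesis using sp by blast
qed

context bbc
begin

interpretation PSF: product_sigma_finite "\<lambda>_::nat \<times> real. lborel :: real measure"
  by unfold_locales

lemma tie_null:
  assumes ab: "a < k" "b < k" "a \<noteq> b" and p: "p \<in> Q"
  shows "AE x in MM. x (a, p) \<noteq> x (b, p)"
proof -
  define i0 where "i0 = (a, p)"
  define J where "J = II - {i0}"
  have II: "II = insert i0 J" "i0 \<notin> J" "finite J" unfolding J_def i0_def II_def using ab p finQ by auto
  have bJ: "(b, p) \<in> J" unfolding J_def i0_def II_def using ab p by auto
  define N where "N = {x \<in> space MM. x (a, p) = x (b, p)}"
  have Nm: "N \<in> sets MM"
  proof -
    have "(a, p) \<in> II" "(b, p) \<in> II" unfolding II_def using ab p by auto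
    then have "(\<lambda>x. \<not> x (a, p) < x (b, p) \<and> \<not> x (b, p) < x (a, p)) \<in> measurable MM (count_space UNIV)"
      by (intro pred_intros_logic pcomp2)
    moreover have "(\<lambda>x :: nat \<times> real \<Rightarrow> real. \<not> x (a, p) < x (b, p) \<and> \<not> x (b, p) < x (a, p)) = (\<lambda>x. x (a, p) = x (b, p))"
      by (intro ext) auto
    ultimately have "(\<lambda>x. x (a, p) = x (b, p)) \<in> measurable MM (count_space UNIV)" by simp
    then show ?thesis unfolding N_def pred_def by simp
  qed
  have "emeasure MM N = (\<integral>\<^sup>+ x. indicator N x \<partial>MM)" using Nm by simp
  also have "\<dots> = (\<integral>\<^sup>+ x. (\<integral>\<^sup>+ y. indicator N (x(i0 := y)) \<partial>lborel) \<partial>PiM J (\<lambda>_. lborel))"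
    unfolding II(1) by (rule PSF.product_nn_integral_insert[OF II(3) II(2)]) (use Nm II(1) in simp)
  also have "\<dots> = (\<integral>\<^sup>+ x. 0 \<partial>PiM J (\<lambda>_. lborel :: real measure))"
  proof (rule nn_integral_cong)
    fix x assume x: "x \<in> space (PiM J (\<lambda>_. lborel :: real measure))"
    have "indicator N (x(i0 := y)) = (indicator {x (b, p)} y :: ennreal)" for y
    proof -
      have "x(i0 := y) \<in> space MM" using x II unfolding space_PiM
        by (auto simp: PiE_iff extensional_def)
      moreover have "(x(i0 := y)) (a, p) = y" "(x(i0 := y)) (b, p) = x (b, p)"
        unfolding i0_def using ab by auto
      ultimately show ?thesis unfolding N_def by (auto simp: indicator_def)
    qed
    then show "(\<integral>\<^sup>+ y. indicator N (x(i0 := y)) \<partial>lborel) = 0" by simp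
  qed
  finally have "N \<in> null_sets MM" using Nm by (simp add: null_sets_def)
  then show ?thesis by (rule AE_I') (auto simp: N_def)
qed

lemma no_ties_AE: "AE x in MM. \<forall>p\<in>Q. \<forall>a<k. \<forall>b<k. a \<noteq> b \<longrightarrow> x (a, p) \<noteq> x (b, p)"
proof -
  have "AE x in MM. \<forall>t\<in>{..<k} \<times> {..<k} \<times> Q. fst t \<noteq> fst (snd t) \<longrightarrow>
      x (fst t, snd (snd t)) \<noteq> x (fst (snd t), snd (snd t))"
    by (rule AE_finite_allI) (auto intro!: tie_null simp: finQ)
  then show ?thesis by (rule AE_mp) (auto intro!: AE_I2)
qed

end



lemma gauss_fin:
  assumes "s > 0"
  shows "(\<integral>\<^sup>+ y. ennreal (exp (- ((y - \<mu>)^2) / (2 * s))) \<partial>lborel) < \<infinity>"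
proof -
  have eq: "exp (- ((y - \<mu>)^2) / (2 * s)) = sqrt (2 * pi * s) * normal_density \<mu> (sqrt s) y" for y
    using assms unfolding normal_density_def by (simp add: real_sqrt_mult)
  have fin: "(\<integral>\<^sup>+ y. ennreal (normal_density \<mu> (sqrt s) y) \<partial>lborel) \<noteq> \<infinity>"
  proof -
    have "integrable lborel (normal_density \<mu> (sqrt s))" using assms by (intro integrable_normal_density) simp
    then show ?thesis by (rule integrableD(2))
  qed
  have "(\<integral>\<^sup>+ y. ennreal (exp (- ((y - \<mu>)^2) / (2 * s))) \<partial>lborel)
      = (\<integral>\<^sup>+ y. ennreal (sqrt (2 * pi * s)) * ennreal (normal_density \<mu> (sqrt s) y) \<partial>lborel)"
    unfolding eq using assms by (intro nn_integral_cong ennreal_mult) auto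
  also have "\<dots> = ennreal (sqrt (2 * pi * s)) * (\<integral>\<^sup>+ y. ennreal (normal_density \<mu> (sqrt s) y) \<partial>lborel)"
    by (rule nn_integral_cmult) simp
  also have "\<dots> < \<infinity>" using fin by (simp add: ennreal_mult_less_top top.not_eq_extremum)
  finally show ?thesis .
qed

context bbc
begin

interpretation PSF: product_sigma_finite "\<lambda>_::nat \<times> real. lborel :: real measure"
  by unfold_locales

lemma ts_bounds: "i < n + 2 \<Longrightarrow> l \<le> ([l] @ ps @ [r]) ! i \<and> ([l] @ ps @ [r]) ! i \<le> r"
proof -
  assume i: "i < n + 2"
  have "([l] @ ps @ [r]) ! i \<in> set ([l] @ ps @ [r])" using i by (intro nth_mem) simp
  then show ?thesis using set_ps Qsub lr by auto
qed

lemma Dl_le: "i < n + 1 \<Longrightarrow> Dl l r ps i \<le> r - l"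
  using ts_bounds[of i] ts_bounds[of "Suc i"] unfolding Dl_def by simp

definition "SS x j = (\<Sum>i<n + 1. (Vv am ap ps x j (Suc i) - Vv am ap ps x j i)^2 / Dl l r ps i)"

lemma SS_nonneg: "SS x j \<ge> 0"
  unfolding SS_def using Dl_pos' by (intro sum_nonneg divide_nonneg_pos) auto

lemma chain_bound:
  assumes m: "m \<le> n + 1"
  shows "(Vv am ap ps x j m - am j)^2 \<le> (real n + 1) * (r - l) * SS x j"
proof -
  define d where "d i = Vv am ap ps x j (Suc i) - Vv am ap ps x j i" for i
  have v0: "Vv am ap ps x j 0 = am j" by (simp add: Vv_eq)
  have tel: "Vv am ap ps x j m - am j = (\<Sum>i<m. d i)"
    unfolding d_def using sum_lessThan_telescope[of "\<lambda>i. Vv am ap ps x j i" m] v0 by simp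
  have "(\<Sum>i<m. d i)^2 \<le> (\<Sum>i<m. (d i)^2) * real m"
    using sum_squared_le_sum_of_squares[of d "{..<m}"] by simp
  also have "\<dots> \<le> (\<Sum>i<n + 1. (d i)^2) * (real n + 1)"
  proof (rule mult_mono)
    show "(\<Sum>i<m. (d i)^2) \<le> (\<Sum>i<n + 1. (d i)^2)"
      by (rule sum_mono2) (use m in auto)
    show "real m \<le> real n + 1" using m by simp
  next
    show "0 \<le> (\<Sum>i<n + 1. (d i)^2)" by (rule sum_nonneg) simp
  qed simp
  also have "(\<Sum>i<n + 1. (d i)^2) \<le> (r - l) * SS x j"
    unfolding SS_def sum_distrib_left
  proof (rule sum_mono)
    fix i assume i: "i \<in> {..<n + 1}"
    have D: "0 < Dl l r ps i" "Dl l r ps i \<le> r - l" using Dl_pos' Dl_le i by auto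
    have "(d i)^2 = Dl l r ps i * ((d i)^2 / Dl l r ps i)" using D by simp
    also have "\<dots> \<le> (r - l) * ((d i)^2 / Dl l r ps i)"
      using D by (intro mult_right_mono) auto
    finally show "(d i)^2 \<le> (r - l) * ((Vv am ap ps x j (Suc i) - Vv am ap ps x j i)^2 / Dl l r ps i)"
      unfolding d_def .
  qed
  then have "(\<Sum>i<n + 1. (d i)^2) * (real n + 1) \<le> (r - l) * SS x j * (real n + 1)"
    by (intro mult_right_mono) auto
  finally show ?thesis unfolding tel by (simp add: algebra_simps)
qed

definition "ZZ = (\<Prod>i<n + 1. sqrt (2 * pi * Dl l r ps i))"

lemma ZZ_pos: "ZZ > 0" unfolding ZZ_def using Dl_pos' by (intro prod_pos) auto

lemma prod_heat_eq:
  "(\<Prod>i<n + 1. heat (Dl l r ps i) (Vv am ap ps x j i) (Vv am ap ps x j (Suc i))) = exp (- SS x j / 2) / ZZ"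
proof -
  have "(\<Prod>i<n + 1. heat (Dl l r ps i) (Vv am ap ps x j i) (Vv am ap ps x j (Suc i)))
     = (\<Prod>i<n + 1. exp (- ((Vv am ap ps x j (Suc i) - Vv am ap ps x j i)^2) / (2 * Dl l r ps i))) / ZZ"
    unfolding heat_def ZZ_def prod_dividef by simp
  also have "(\<Prod>i<n + 1. exp (- ((Vv am ap ps x j (Suc i) - Vv am ap ps x j i)^2) / (2 * Dl l r ps i)))
      = exp (\<Sum>i<n + 1. - ((Vv am ap ps x j (Suc i) - Vv am ap ps x j i)^2) / (2 * Dl l r ps i))"
    by (rule exp_sum[symmetric]) simp
  also have "(\<Sum>i<n + 1. - ((Vv am ap ps x j (Suc i) - Vv am ap ps x j i)^2) / (2 * Dl l r ps i)) = - SS x j / 2"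
  proof -
    have "(\<Sum>i<n + 1. - ((Vv am ap ps x j (Suc i) - Vv am ap ps x j i)^2) / (2 * Dl l r ps i))
       = (\<Sum>i<n + 1. ((Vv am ap ps x j (Suc i) - Vv am ap ps x j i)^2 / Dl l r ps i) * (-1/2))"
      by (intro sum.cong) auto
    also have "\<dots> = SS x j * (-1/2)" unfolding SS_def by (rule sum_distrib_right[symmetric])
    finally show ?thesis by simp
  qed
  finally show ?thesis .
qed

lemma chain_nonneg: "0 \<le> (\<Prod>i<n + 1. heat (Dl l r ps i) (Vv am ap ps x j i) (Vv am ap ps x j (Suc i)))"
  by (rule prod_nonneg) (use Dl_pos' in \<open>auto intro: less_imp_le[OF heat_pos]\<close>)

definition "s2 = real n * ((real n + 1) * (r - l))"
definition "GG j y = exp (- ((y - am j)^2) / (2 * s2))"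

lemma s2_pos: "Q \<noteq> {} \<Longrightarrow> s2 > 0"
  unfolding s2_def using lr finQ by (simp add: card_gt_0_iff)

lemma curve_bound:
  assumes Qne: "Q \<noteq> {}"
  shows "(\<Prod>i<n + 1. heat (Dl l r ps i) (Vv am ap ps x j i) (Vv am ap ps x j (Suc i)))
     \<le> (\<Prod>p\<in>Q. GG j (x (j, p))) / ZZ"
proof -
  have sb: "(\<Sum>i<n. (x (j, ps ! i) - am j)^2) \<le> s2 * SS x j"
  proof -
    have "(\<Sum>i<n. (x (j, ps ! i) - am j)^2) = (\<Sum>i<n. (Vv am ap ps x j (Suc i) - am j)^2)"
      by (intro sum.cong) (auto simp: Vv_eq)
    also have "\<dots> \<le> (\<Sum>i<n. (real n + 1) * (r - l) * SS x j)"
      by (intro sum_mono chain_bound) auto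
    also have "\<dots> = s2 * SS x j" unfolding s2_def by simp
    finally show ?thesis .
  qed
  have s2p: "s2 > 0" using s2_pos[OF Qne] .
  have "- SS x j / 2 \<le> - (\<Sum>i<n. (x (j, ps ! i) - am j)^2) / (2 * s2)"
    using sb s2p by (simp add: field_simps)
  then have "exp (- SS x j / 2) \<le> exp (\<Sum>i<n. - ((x (j, ps ! i) - am j)^2) / (2 * s2))"
    by (simp add: sum_divide_distrib[symmetric] sum_negf)
  also have "\<dots> = (\<Prod>i<n. GG j (x (j, ps ! i)))" unfolding GG_def by (simp add: exp_sum)
  also have "\<dots> = (\<Prod>p\<in>Q. GG j (x (j, p)))"
    using prod.reindex_bij_betw[OF bij_betw_nth[of ps "{..<n}" Q], of "\<lambda>p. GG j (x (j, p))"] set_ps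
    by simp
  finally have "exp (- SS x j / 2) \<le> (\<Prod>p\<in>Q. GG j (x (j, p)))" .
  then show ?thesis unfolding prod_heat_eq using ZZ_pos by (intro divide_right_mono) auto
qed

lemma dens_bound:
  assumes Qne: "Q \<noteq> {}"
  shows "dens x \<le> (\<Prod>i\<in>II. GG (fst i) (x i)) / (ZZ ^ k * (\<Prod>j<k. heat (r - l) (am j) (ap j)))"
proof -
  have sw: "(\<Prod>i<n + 1. \<Prod>j<k. heat (Dl l r ps i) (Vv am ap ps x j i) (Vv am ap ps x j (Suc i)))
     = (\<Prod>j<k. \<Prod>i<n + 1. heat (Dl l r ps i) (Vv am ap ps x j i) (Vv am ap ps x j (Suc i)))"
    by (rule prod.swap)
  have "dens x = (\<Prod>j<k. \<Prod>i<n + 1. heat (Dl l r ps i) (Vv am ap ps x j i) (Vv am ap ps x j (Suc i)))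
      / (\<Prod>j<k. heat (r - l) (am j) (ap j))" unfolding dens_eq sw ..
  also have "\<dots> \<le> (\<Prod>j<k. (\<Prod>p\<in>Q. GG j (x (j, p))) / ZZ) / (\<Prod>j<k. heat (r - l) (am j) (ap j))"
    apply (intro divide_right_mono prod_mono conjI curve_bound[OF Qne] chain_nonneg)
    using denom_pos by auto
  also have "(\<Prod>j<k. (\<Prod>p\<in>Q. GG j (x (j, p))) / ZZ) = (\<Prod>j<k. \<Prod>p\<in>Q. GG j (x (j, p))) / ZZ ^ k"
    by (simp add: prod_dividef)
  also have "(\<Prod>j<k. \<Prod>p\<in>Q. GG j (x (j, p))) = (\<Prod>i\<in>II. GG (fst i) (x i))"
    unfolding II_def by (simp add: prod.cartesian_product atLeast0LessThan case_prod_beta)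
  finally show ?thesis by simp
qed

lemma dens_int_fin:
  assumes Qne: "Q \<noteq> {}"
  shows "(\<integral>\<^sup>+ x. ennreal (dens x) \<partial>MM) < \<infinity>"
proof -
  define K where "K = 1 / (ZZ ^ k * (\<Prod>j<k. heat (r - l) (am j) (ap j)))"
  have Kp: "K > 0" unfolding K_def using ZZ_pos denom_pos by simp
  have "(\<integral>\<^sup>+ x. ennreal (dens x) \<partial>MM) \<le> (\<integral>\<^sup>+ x. ennreal K * (\<Prod>i\<in>II. ennreal (GG (fst i) (x i))) \<partial>MM)"
  proof (rule nn_integral_mono)
    fix x
    have "dens x \<le> K * (\<Prod>i\<in>II. GG (fst i) (x i))" using dens_bound[OF Qne, of x] unfolding K_def by simp
    moreover have "ennreal (K * (\<Prod>i\<in>II. GG (fst i) (x i))) = ennreal K * ennreal (\<Prod>i\<in>II. GG (fst i) (x i))"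
      by (rule ennreal_mult) (use Kp in \<open>auto intro!: prod_nonneg simp: GG_def\<close>)
    moreover have "ennreal (\<Prod>i\<in>II. GG (fst i) (x i)) = (\<Prod>i\<in>II. ennreal (GG (fst i) (x i)))"
      by (rule prod_ennreal[symmetric]) (simp add: GG_def)
    ultimately show "ennreal (dens x) \<le> ennreal K * (\<Prod>i\<in>II. ennreal (GG (fst i) (x i)))"
      by (metis ennreal_leI)
  qed
  also have "\<dots> = ennreal K * (\<integral>\<^sup>+ x. (\<Prod>i\<in>II. ennreal (GG (fst i) (x i))) \<partial>MM)"
    by (rule nn_integral_cmult) (auto intro!: borel_measurable_prod_ennreal comp_meas simp: GG_def)
  also have "(\<integral>\<^sup>+ x. (\<Prod>i\<in>II. ennreal (GG (fst i) (x i))) \<partial>MM) = (\<Prod>i\<in>II. \<integral>\<^sup>+ y. ennreal (GG (fst i) y) \<partial>lborel)"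
    by (rule PSF.product_nn_integral_prod[OF finII]) (simp add: GG_def)
  also have "ennreal K * \<dots> < \<infinity>"
  proof -
    have fi: "(\<integral>\<^sup>+ y. ennreal (GG (fst i) y) \<partial>lborel) \<noteq> top" for i
      unfolding GG_def using gauss_fin[OF s2_pos[OF Qne]] by (simp add: less_top)
    have "(\<Prod>i\<in>II. \<integral>\<^sup>+ y. ennreal (GG (fst i) y) \<partial>lborel) \<noteq> top"
      using ennreal_prod_eq_top[of "\<lambda>i. \<integral>\<^sup>+ y. ennreal (GG (fst i) y) \<partial>lborel" II] fi by blast
    then show ?thesis by (simp add: ennreal_mult_less_top top.not_eq_extremum)
  qed
  finally show ?thesis .
qed

end



context bbc
begin

interpretation PSF: product_sigma_finite "\<lambda>_::nat \<times> real. lborel :: real measure"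
  by unfold_locales

lemma f_meas: "(\<lambda>x. ennreal (F x * dens x)) \<in> borel_measurable MM" if "F \<in> borel_measurable MM"
  using that dens_meas by measurable

lemma B_pos:
  assumes Qne: "Q \<noteq> {}"
  shows "(\<integral>\<^sup>+ x. ennreal (Wp k g Q x * dens x) \<partial>MM) \<noteq> 0"
proof
  assume "(\<integral>\<^sup>+ x. ennreal (Wp k g Q x * dens x) \<partial>MM) = 0"
  then have "AE x in MM. ennreal (Wp k g Q x * dens x) = 0"
    using nn_integral_0_iff_AE[OF f_meas[OF Wp_meas]] by simp
  then obtain N where N: "{x \<in> space MM. \<not> ennreal (Wp k g Q x * dens x) = 0} \<subseteq> N" "N \<in> sets MM" "emeasure MM N = 0"
    by (auto elim!: AE_E)
  define Bx where "Bx = Pi\<^sub>E II (\<lambda>i. {g (snd i) <.. g (snd i) + 1})"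
  have "Bx \<subseteq> {x \<in> space MM. \<not> ennreal (Wp k g Q x * dens x) = 0}"
  proof
    fix x assume x: "x \<in> Bx"
    have "x \<in> space MM" using x unfolding Bx_def by (auto simp: space_PiM PiE_iff)
    moreover have "Wp k g Q x = 1" unfolding Wp_def using x unfolding Bx_def II_def
      by (auto simp: PiE_iff)
    ultimately show "x \<in> {x \<in> space MM. \<not> ennreal (Wp k g Q x * dens x) = 0}"
      using dens_pos[of x] by simp
  qed
  then have "emeasure MM Bx \<le> emeasure MM N" using N by (intro emeasure_mono) auto
  moreover have "emeasure MM Bx = (\<Prod>i\<in>II. emeasure lborel {g (snd i) <.. g (snd i) + 1})"
    unfolding Bx_def by (intro PSF.emeasure_PiM finII) auto
  ultimately show False using N by simp
qed

definition "PE = Pi\<^sub>E Q (\<lambda>_. {\<sigma>. \<sigma> permutes {..<k}})"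

lemma PE_fin: "finite PE" unfolding PE_def using finQ by (intro finite_PiE finite_permutations) auto

lemma PE_card: "card PE = fact k ^ card Q"
  unfolding PE_def using finQ by (simp add: card_PiE card_permutations)

lemma PE_Perms: "\<pi> \<in> PE \<Longrightarrow> \<pi> \<in> Perms" unfolding PE_def Perms_def by auto

lemma Wplus_le_Wp: "Wplus k g Q x * Wp k g Q x = Wplus k g Q x"
proof (cases "Wplus k g Q x = 1")
  case True
  then have h: "\<forall>p\<in>Q. g p < x (k - 1, p) \<and> (\<forall>j. j + 1 < k \<longrightarrow> x (j + 1, p) < x (j, p))"
    unfolding Wplus_def by (auto split: if_splits)
  have "Wp k g Q x = 1" unfolding Wp_def
  proof (simp, intro ballI allI impI)
    fix p j assume p: "p \<in> Q" and j: "j < k"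
    have "x (k - 1, p) \<le> x (j, p)"
      using dec_from_step[of k "\<lambda>j. x (j, p)" j "k - 1"] h p j by auto
    then show "g p < x (j, p)" using h p by force
  qed
  then show ?thesis using True by simp
next
  case False
  then have "Wplus k g Q x = 0" unfolding Wplus_def by (auto split: if_splits)
  then show ?thesis by simp
qed

lemma pointwise:
  assumes nt: "\<forall>p\<in>Q. \<forall>a<k. \<forall>b<k. a \<noteq> b \<longrightarrow> x (a, p) \<noteq> x (b, p)"
  shows "ennreal (Wp k g Q x * dens x) \<le> (\<Sum>\<pi>\<in>PE. ennreal (Wplus k g Q (Phi \<pi> x) * dens (Phi \<pi> x)))"
proof (cases "Wp k g Q x = 1")
  case False
  then have "Wp k g Q x = 0" unfolding Wp_def by (auto split: if_splits)
  then show ?thesis by simp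
next
  case True
  then have above: "\<forall>p\<in>Q. \<forall>j<k. g p < x (j, p)" unfolding Wp_def by (auto split: if_splits)
  have "\<forall>p\<in>Q. \<exists>\<sigma>. \<sigma> permutes {..<k} \<and> (\<forall>a b. a < b \<longrightarrow> b < k \<longrightarrow> x (\<sigma> b, p) < x (\<sigma> a, p))"
  proof
    fix p assume p: "p \<in> Q"
    have "inj_on (\<lambda>j. x (j, p)) {..<k}" using nt p by (auto intro!: inj_onI)
    then show "\<exists>\<sigma>. \<sigma> permutes {..<k} \<and> (\<forall>a b. a < b \<longrightarrow> b < k \<longrightarrow> x (\<sigma> b, p) < x (\<sigma> a, p))"
      using rank_perm[of "\<lambda>j. x (j, p)" k] by simp
  qed
  then obtain \<pi>0 where \<pi>0: "\<forall>p\<in>Q. \<pi>0 p permutes {..<k} \<and> (\<forall>a b. a < b \<longrightarrow> b < k \<longrightarrow> x (\<pi>0 p b, p) < x (\<pi>0 p a, p))"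
    by metis
  define \<pi> where "\<pi> = restrict \<pi>0 Q"
  have piPE: "\<pi> \<in> PE" unfolding PE_def \<pi>_def using \<pi>0 by auto
  have pperm: "\<forall>p\<in>Q. \<pi> p permutes {..<k}" using \<pi>0 unfolding \<pi>_def by auto
  have pdec: "\<forall>p\<in>Q. \<forall>a b. a < b \<longrightarrow> b < k \<longrightarrow> x (\<pi> p b, p) < x (\<pi> p a, p)" using \<pi>0 unfolding \<pi>_def by auto
  have pdec': "\<forall>p\<in>Q. \<forall>a b. a \<le> b \<longrightarrow> b < k \<longrightarrow> x (\<pi> p b, p) \<le> x (\<pi> p a, p)"
    using pdec by (metis order.order_iff_strict order.refl less_imp_le)
  have Phi_at: "Phi \<pi> x (j, p) = x (\<pi> p j, p)" if "j < k" "p \<in> Q" for j p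
    unfolding Phi_def ee_def II_def using that by simp
  have cond: "\<forall>p\<in>Q. g p < Phi \<pi> x (k - 1, p) \<and> (\<forall>j. j + 1 < k \<longrightarrow> Phi \<pi> x (j + 1, p) < Phi \<pi> x (j, p))"
  proof (intro ballI conjI allI impI)
    fix p assume p: "p \<in> Q"
    have "\<pi> p (k - 1) < k" using perm_lt[of "\<pi> p" k "k - 1"] pperm p kpos by auto
    then show "g p < Phi \<pi> x (k - 1, p)" using above p Phi_at[of "k - 1" p] kpos by auto
    fix j assume "j + 1 < k"
    then show "Phi \<pi> x (j + 1, p) < Phi \<pi> x (j, p)" using pdec p Phi_at[of j p] Phi_at[of "j + 1" p] by auto
  qed
  have "Wplus k g Q (Phi \<pi> x) = 1" unfolding Wplus_def using cond by simp
  moreover have "dens x \<le> dens (Phi \<pi> x)" by (rule dens_Phi_mono[OF pperm pdec'])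
  ultimately have "ennreal (Wp k g Q x * dens x) \<le> ennreal (Wplus k g Q (Phi \<pi> x) * dens (Phi \<pi> x))"
    using True by (simp add: ennreal_leI)
  also have "\<dots> \<le> (\<Sum>\<pi>\<in>PE. ennreal (Wplus k g Q (Phi \<pi> x) * dens (Phi \<pi> x)))"
    by (rule member_le_sum[OF piPE]) (auto simp: PE_fin)
  finally show ?thesis .
qed

lemma main_ineq:
  "(\<integral>\<^sup>+ x. ennreal (Wp k g Q x * dens x) \<partial>MM) \<le> of_nat (card PE) * (\<integral>\<^sup>+ x. ennreal (Wplus k g Q x * dens x) \<partial>MM)"
proof -
  have "(\<integral>\<^sup>+ x. ennreal (Wp k g Q x * dens x) \<partial>MM)
      \<le> (\<integral>\<^sup>+ x. (\<Sum>\<pi>\<in>PE. ennreal (Wplus k g Q (Phi \<pi> x) * dens (Phi \<pi> x))) \<partial>MM)"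
    by (rule nn_integral_mono_AE) (rule AE_mp[OF no_ties_AE], auto intro!: AE_I2 pointwise)
  also have "\<dots> = (\<Sum>\<pi>\<in>PE. (\<integral>\<^sup>+ x. ennreal (Wplus k g Q (Phi \<pi> x) * dens (Phi \<pi> x)) \<partial>MM))"
  proof (rule nn_integral_sum)
    fix \<pi> assume "\<pi> \<in> PE"
    then have "Phi \<pi> \<in> MM \<rightarrow>\<^sub>M MM" using Phi_meas PE_Perms by blast
    then show "(\<lambda>x. ennreal (Wplus k g Q (Phi \<pi> x) * dens (Phi \<pi> x))) \<in> borel_measurable MM"
      using f_meas[OF Wplus_meas] by (rule measurable_compose[where f = "Phi \<pi>", unfolded comp_def])
  qed
  also have "\<dots> = (\<Sum>\<pi>\<in>PE. (\<integral>\<^sup>+ x. ennreal (Wplus k g Q x * dens x) \<partial>MM))"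
    by (intro sum.cong refl nn_integral_Phi[OF PE_Perms f_meas[OF Wplus_meas]])
  also have "\<dots> = of_nat (card PE) * (\<integral>\<^sup>+ x. ennreal (Wplus k g Q x * dens x) \<partial>MM)" by simp
  finally show ?thesis .
qed

lemma ratio_bound:
  assumes Qne: "Q \<noteq> {}"
  shows "E_L k l r am ap g Q (Wplus k g Q) \<ge> 1 / fact k ^ card Q"
proof -
  define A where "A = (\<integral>\<^sup>+ x. ennreal (Wplus k g Q x * dens x) \<partial>MM)"
  define B where "B = (\<integral>\<^sup>+ x. ennreal (Wp k g Q x * dens x) \<partial>MM)"
  have EA: "E_free k l r am ap Q (\<lambda>x. Wplus k g Q x * Wp k g Q x) = A"
    unfolding E_free_def A_def Wplus_le_Wp dens_def II_def ..
  have EB: "E_free k l r am ap Q (Wp k g Q) = B"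
    unfolding E_free_def B_def dens_def II_def ..
  have B0: "B \<noteq> 0" unfolding B_def by (rule B_pos[OF Qne])
  have Bfin: "B < top"
  proof -
    have "B \<le> (\<integral>\<^sup>+ x. ennreal (dens x) \<partial>MM)" unfolding B_def
      by (intro nn_integral_mono ennreal_leI) (auto simp: Wp_def less_imp_le[OF dens_pos])
    then show ?thesis using dens_int_fin[OF Qne] by (simp add: order_le_less_trans)
  qed
  have AB: "A \<le> B" unfolding A_def B_def
  proof (intro nn_integral_mono ennreal_leI)
    fix x
    have "Wplus k g Q x \<le> Wp k g Q x"
      using Wplus_le_Wp[where g=g and x=x] by (auto simp: Wplus_def Wp_def split: if_splits)
    then show "Wplus k g Q x * dens x \<le> Wp k g Q x * dens x"
      using dens_pos[of x] by (intro mult_right_mono) auto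
  qed
  have Afin: "A < top" using AB Bfin by (simp add: order_le_less_trans)
  define N where "N = card PE"
  have Npos: "N > 0" unfolding N_def PE_card by simp
  have mi: "B \<le> of_nat N * A" unfolding A_def B_def N_def by (rule main_ineq)
  have "of_nat N * A < top" using Afin by (simp add: ennreal_mult_less_top of_nat_less_top)
  then have "enn2real B \<le> enn2real (of_nat N * A)" by (rule enn2real_mono[OF mi])
  then have BA: "enn2real B \<le> real N * enn2real A" by (simp add: enn2real_mult)
  have Bp: "enn2real B > 0" using B0 Bfin by (simp add: enn2real_positive_iff zero_less_iff_neq_zero)
  have "1 / real N \<le> enn2real A / enn2real B"
    using BA Bp Npos by (simp add: field_simps)
  then show ?thesis unfolding E_L_def EA EB N_def PE_card by simp
qed

end



theorem mainTheorem7: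
  fixes k :: nat and b0 b1 lam0 lam1 :: real
  assumes "k \<ge> 1" and "b0 > 0" and "b1 > 0" and "lam0 > 0" and "lam1 > 0"
  shows "\<exists>C>0. \<forall>b2>0. \<forall>(T::real) (l::real) (r::real) (am::nat \<Rightarrow> real) (ap::nat \<Rightarrow> real)
           (g::real \<Rightarrow> real) (P::real set).
     T \<ge> 10 \<and> l < r \<and> finite P \<and> P \<subseteq> {l<..<r} \<and>
     P \<inter> {l + sqrt T .. r - sqrt T} \<noteq> {} \<and>
     g l = 0 \<and> g r = 0 \<and>
     r - l \<le> b0 * T \<and> real (card P) \<le> b0 * T \<and>
     (\<forall>x\<in>{l..r}. \<forall>y\<in>{l..r}. \<bar>g x - g y\<bar> \<le> b1 * T * \<bar>x - y\<bar>) \<and>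
     (\<forall>j. j + 1 < k \<longrightarrow> am j - am (j + 1) \<ge> lam0 * sqrt T \<and> ap j - ap (j + 1) \<ge> lam0 * sqrt T) \<and>
     am (k - 1) - g l \<ge> lam1 * T \<and> ap (k - 1) - g r \<ge> lam1 * T \<and>
     am 0 - g l \<le> b2 * T^2 \<and> ap 0 - g r \<le> b2 * T^2
     \<longrightarrow> E_L k l r am ap g (P \<inter> {l + sqrt T .. r - sqrt T})
            (Wplus k g (P \<inter> {l + sqrt T .. r - sqrt T})) \<ge> exp (- C * T) / C"
proof -
  define L where "L = ln (fact k :: real)"
  have L0: "L \<ge> 0" unfolding L_def by simp
  define C where "C = 1 + b0 * L"
  have C1: "C \<ge> 1" unfolding C_def using L0 assms(2) by simp
  show ?thesis
  proof (intro exI[of _ C] conjI allI impI)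
    show "C > 0" using C1 by simp
    fix b2 :: real and T l r :: real and am ap :: "nat \<Rightarrow> real" and g :: "real \<Rightarrow> real" and P :: "real set"
    assume H: "T \<ge> 10 \<and> l < r \<and> finite P \<and> P \<subseteq> {l<..<r} \<and>
     P \<inter> {l + sqrt T .. r - sqrt T} \<noteq> {} \<and>
     g l = 0 \<and> g r = 0 \<and>
     r - l \<le> b0 * T \<and> real (card P) \<le> b0 * T \<and>
     (\<forall>x\<in>{l..r}. \<forall>y\<in>{l..r}. \<bar>g x - g y\<bar> \<le> b1 * T * \<bar>x - y\<bar>) \<and>
     (\<forall>j. j + 1 < k \<longrightarrow> am j - am (j + 1) \<ge> lam0 * sqrt T \<and> ap j - ap (j + 1) \<ge> lam0 * sqrt T) \<and>
     am (k - 1) - g l \<ge> lam1 * T \<and> ap (k - 1) - g r \<ge> lam1 * T \<and>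
     am 0 - g l \<le> b2 * T^2 \<and> ap 0 - g r \<le> b2 * T^2"
    define Q where "Q = P \<inter> {l + sqrt T .. r - sqrt T}"
    have T0: "T > 0" using H by simp
    have sT: "lam0 * sqrt T > 0" using T0 assms(4) by simp
    interpret bbc k l r am ap Q
    proof
      show "1 \<le> k" by (rule assms(1))
      show "finite Q" unfolding Q_def using H by simp
      show "Q \<subseteq> {l<..<r}" unfolding Q_def using H by auto
      show "l < r" using H by simp
      show "\<forall>j. j + 1 < k \<longrightarrow> am (j + 1) < am j" using H sT by (metis diff_gt_0_iff_gt order_less_le_trans)
      show "\<forall>j. j + 1 < k \<longrightarrow> ap (j + 1) < ap j" using H sT by (metis diff_gt_0_iff_gt order_less_le_trans)
    qed
    have Qne: "Q \<noteq> {}" unfolding Q_def using H by simp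
    have rb: "E_L k l r am ap g Q (Wplus k g Q) \<ge> 1 / fact k ^ card Q" by (rule ratio_bound[OF Qne])
    have cQ: "real (card Q) \<le> b0 * T"
    proof -
      have "card Q \<le> card P" unfolding Q_def using H by (intro card_mono) auto
      then show ?thesis using H by linarith
    qed
    have "1 / (fact k :: real) ^ card Q = exp (- (real (card Q) * L))"
      unfolding L_def by (simp add: exp_minus exp_of_nat_mult[symmetric] ln_realpow[symmetric] divide_inverse)
    also have "exp (- (real (card Q) * L)) \<ge> exp (- C * T)"
    proof -
      have "real (card Q) * L \<le> b0 * T * L" using cQ L0 by (intro mult_right_mono) auto
      also have "\<dots> \<le> C * T" unfolding C_def using T0 by (simp add: algebra_simps)
      finally show ?thesis by simp
    qed
    finally have "exp (- C * T) \<le> 1 / fact k ^ card Q" .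
    moreover have "exp (- C * T) / C \<le> exp (- C * T)" using C1 by (simp add: divide_le_eq)
    ultimately show "exp (- C * T) / C \<le> E_L k l r am ap g (P \<inter> {l + sqrt T .. r - sqrt T}) (Wplus k g (P \<inter> {l + sqrt T .. r - sqrt T}))"
      using rb unfolding Q_def by linarith
  qed
qed


end
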